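(* For every $x\in[0,1/56]$ there exists a sequence $(\tilde d_i(x))_{i\ge1}$ with each $\tilde d_i(x)\in\{0\}\cup\{1/n:n\ge1\}$ such that $$x=\sum_{i=1}^{\infty}\frac{\tilde d_i(x)}{8^i}.$$ *)

theory Defs
  imports "HOL-Analysis.Analysis"
begin

end

theory Submission
  imports Defs
begin

definition dig :: "real \<Rightarrow> real" where
  "dig y = (if y \<le> 1/56 then 0 else 1 / real (nat (ceiling (1/y))))"

definition stepfn :: "real \<Rightarrow> real" where
  "stepfn v = 8 * v - dig (8 * v)"

lemma step:
  assumes "0 \<le> v" "v \<le> 1/56"
  shows "dig (8 * v) \<in> {0} \<union> {1 / real n | n. n \<ge> 1} \<and> 0 \<le> stepfn v \<and> stepfn v \<le> 1/56"
proof (cases "8 * v \<le> 1/56")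
  case True
  then show ?thesis using assms by (simp add: dig_def stepfn_def)
next
  case False
  define y where "y = 8 * v"
  have y: "1/56 < y" "y \<le> 1/7" using False assms by (auto simp: y_def)
  define n where "n = nat (ceiling (1/y))"
  have iy: "1/y \<ge> 7" using y by (simp add: field_simps)
  have m1: "real n \<ge> 1/y" unfolding n_def using iy by linarith
  have m2: "real n < 1/y + 1" unfolding n_def using iy by linarith
  have n7: "n \<ge> 7" using m1 iy by linarith
  have ym1: "y * real n \<ge> 1" using m1 y by (simp add: field_simps)
  have ym2: "y * real n < 1 + y" using m2 y by (simp add: field_simps)
  have dg: "dig (8 * v) = 1 / real n" using False by (simp add: dig_def n_def y_def)
  have pos: "0 \<le> y - 1 / real n" using ym1 n7 y by (simp add: field_simps)
  have key: "56 * (y * real n - 1) \<le> real n"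
  proof (cases "n \<ge> 8")
    case True
    then have "real n \<ge> 8" by simp
    moreover have "56 * (y * real n - 1) < 56 * y" using ym2 by simp
    ultimately show ?thesis using y by linarith
  next
    case False
    then have "n = 7" using n7 by simp
    then show ?thesis using y by simp
  qed
  have up: "y - 1 / real n \<le> 1/56" using key n7 by (simp add: field_simps)
  show ?thesis using dg pos up n7 by (auto simp: stepfn_def y_def)
qed

theorem lemma2p4:
  fixes x :: real
  assumes "0 \<le> x" and "x \<le> 1/56"
  shows "\<exists>d :: nat \<Rightarrow> real.
           (\<forall>i\<ge>1. d i \<in> {0} \<union> {1 / real n | n. n \<ge> 1}) \<and>
           (\<lambda>i. d (Suc i) / 8 ^ (Suc i)) sums x"
proof -
  define v where "v k = (stepfn ^^ k) x" for k
  have vb: "0 \<le> v k \<and> v k \<le> 1/56" for k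
    by (induction k) (use assms step in \<open>auto simp: v_def\<close>)
  define d where "d i = (if i = 0 then 0 else dig (8 * v (i - 1)))" for i
  have D: "\<forall>i\<ge>1. d i \<in> {0} \<union> {1 / real n | n. n \<ge> 1}"
  proof (intro allI impI)
    fix i :: nat assume "i \<ge> 1"
    then obtain k where "i = Suc k" by (cases i) auto
    then show "d i \<in> {0} \<union> {1 / real n | n. n \<ge> 1}"
      using step[OF conjunct1[OF vb] conjunct2[OF vb], of k] by (simp add: d_def)
  qed
  have vs: "v (Suc k) = 8 * v k - d (Suc k)" for k
    by (simp add: v_def d_def stepfn_def)
  have part: "(\<Sum>i<k. d (Suc i) / 8 ^ (Suc i)) = x - v k / 8 ^ k" for k
  proof (induction k)
    case 0 then show ?case by (simp add: v_def)
  next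
    case (Suc k)
    then show ?case by (simp add: vs field_simps)
  qed
  have lim: "(\<lambda>k. v k / 8 ^ k) \<longlonglongrightarrow> 0"
  proof (rule Lim_null_comparison[where g = "\<lambda>k. (1/56) * (1/8) ^ k"])
    show "\<forall>\<^sub>F k in sequentially. norm (v k / 8 ^ k) \<le> (1/56) * (1/8) ^ k"
    proof (intro always_eventually allI)
      fix k :: nat
      have "norm (v k / 8 ^ k) = v k / 8 ^ k" using vb[of k] by simp
      also have "\<dots> \<le> (1/56) / 8 ^ k" using vb[of k] by (intro divide_right_mono) auto
      also have "\<dots> = (1/56) * (1/8) ^ k" by (simp add: power_divide)
      finally show "norm (v k / 8 ^ k) \<le> (1/56) * (1/8) ^ k" .
    qed
    show "(\<lambda>k. (1/56) * (1/8::real) ^ k) \<longlonglongrightarrow> 0"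
      by (intro tendsto_mult_right_zero LIMSEQ_power_zero) auto
  qed
  have "(\<lambda>k. x - v k / 8 ^ k) \<longlonglongrightarrow> x - 0"
    by (intro tendsto_diff tendsto_const lim)
  then have "(\<lambda>i. d (Suc i) / 8 ^ (Suc i)) sums x"
    unfolding sums_def using part by simp
  then show ?thesis using D by blast
qed

end
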